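(* Let $H$ be local $\delta$-admissible on a set $T\subset(-\infty,t_G)$, where $t_G\in\{0,\infty\}$. Then for any $\varepsilon>0$ there exist $\eta>0$ and $t_0<t_G$ such that for all $t\in T$ with $t>t_0$ and all real $\theta$ with $|\theta|\le\frac{\eta}{2}\delta(t)$, \[ (1-\varepsilon)B(t)|\theta|\le|A(t+i\theta)-A(t)|\le(1+\varepsilon)B(t)|\theta|, \] and \[ \frac{1-\varepsilon}{2}\theta^2B(t)\le\int_0^\theta\mathrm{Im}\left[A(t+i\varphi)\right]d\varphi\le\frac{1+\varepsilon}{2}\theta^2B(t). \]
   Context: Let $G(z)=\sum_{n\ge0}a_n^2z^n$ with $a_n\ge0$, infinitely many non-zero, and radius of convergence $R_G\in\{1,\infty\}$; $t_G=\log R_G$. Put $H(z)=G(e^z)$, $A(z)=H'(z)/H(z)$, $B(z)=A'(z)$. $H$ is local $\delta$-admissible on $T\subset(-\infty,t_G)$ if there is a function $\delta:[-\infty,t_G)\to(0,\pi)$ (with $t+\delta(t)<t_G$) such that for every $\varepsilon>0$ there exist $\eta>0$ and $t_0(\varepsilon)$ such that for all $t\in T\cap(t_0(\varepsilon),t_G)$ and all complex $\tau$ with $|\tau|\le\eta\delta(t)$, \[ \log\frac{H(t+\tau)}{H(t)}=\tau A(t)+\tfrac12\tau^2B(t)+h_t(\tau),\qquad |h_t(\tau)|\le\varepsilon|\tau|^2B(t), \] where the logarithm is the branch analytic in $\tau$ and vanishing at $\tau=0$. *)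

theory Defs
  imports "HOL-Analysis.Analysis"
begin

definition Gf :: "(nat \<Rightarrow> real) \<Rightarrow> complex \<Rightarrow> complex" where
  "Gf a z = (\<Sum>n. complex_of_real ((a n)\<^sup>2) * z ^ n)"

definition Hf :: "(nat \<Rightarrow> real) \<Rightarrow> complex \<Rightarrow> complex" where
  "Hf a z = Gf a (exp z)"

definition Af :: "(nat \<Rightarrow> real) \<Rightarrow> complex \<Rightarrow> complex" where
  "Af a z = deriv (Hf a) z / Hf a z"

definition Bf :: "(nat \<Rightarrow> real) \<Rightarrow> complex \<Rightarrow> complex" where
  "Bf a z = deriv (Af a) z"

definition RG :: "(nat \<Rightarrow> real) \<Rightarrow> ereal" where
  "RG a = conv_radius (\<lambda>n. (a n)\<^sup>2)"

definition tG :: "(nat \<Rightarrow> real) \<Rightarrow> ereal" where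
  "tG a = (if RG a = \<infinity> then \<infinity> else ereal (ln (real_of_ereal (RG a))))"

definition G_standing :: "(nat \<Rightarrow> real) \<Rightarrow> bool" where
  "G_standing a \<longleftrightarrow> (\<forall>n. 0 \<le> a n) \<and> infinite {n. a n \<noteq> 0} \<and> RG a \<in> {1, \<infinity>}"

text \<open>The logarithm log(H(t+tau)/H(t)) is
  represented by a function L holomorphic in tau on the disc, vanishing at 0,
  with exp (L tau) = H(t+tau)/H(t) (the branch analytic in tau vanishing at 0).\<close>

definition local_delta_admissible ::
  "(nat \<Rightarrow> real) \<Rightarrow> (real \<Rightarrow> real) \<Rightarrow> real set \<Rightarrow> bool" where
  "local_delta_admissible a \<delta> T \<longleftrightarrow>
     T \<subseteq> {t. ereal t < tG a} \<and>
     (\<forall>t. ereal t < tG a \<longrightarrow> 0 < \<delta> t \<and> \<delta> t < pi \<and> ereal (t + \<delta> t) < tG a) \<and>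
     (\<forall>\<epsilon>>0. \<exists>\<eta>>0. \<exists>t0. ereal t0 < tG a \<and>
        (\<forall>t\<in>T. t0 < t \<longrightarrow>
          (\<exists>L. L holomorphic_on cball 0 (\<eta> * \<delta> t) \<and> L 0 = 0 \<and>
             (\<forall>\<tau>\<in>cball 0 (\<eta> * \<delta> t).
                exp (L \<tau>) = Hf a (of_real t + \<tau>) / Hf a (of_real t) \<and>
                cmod (L \<tau> - (\<tau> * Af a (of_real t) + \<tau>\<^sup>2 / 2 * Bf a (of_real t)))
                  \<le> \<epsilon> * (cmod \<tau>)\<^sup>2 * Re (Bf a (of_real t))))))"

end

theory Submission
  imports Defs "HOL-Complex_Analysis.Cauchy_Integral_Formula"
begin

lemma deriv_real_aux:
  fixes f :: "complex \<Rightarrow> complex"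
  assumes D: "DERIV f x :> D" and x: "x \<in> \<real>" and d: "d > 0"
    and fr: "\<And>y. y \<in> \<real> \<Longrightarrow> dist y x < d \<Longrightarrow> f y \<in> \<real>"
  shows "D \<in> \<real>"
proof -
  have "(f has_field_derivative D) (at x within \<real>)"
    using D has_field_derivative_at_within by blast
  hence lim: "((\<lambda>y. (f y - f x) / (y - x)) \<longlongrightarrow> D) (at x within \<real>)"
    by (simp add: has_field_derivative_iff)
  have "x islimpt \<real>"
    unfolding islimpt_approachable
  proof (intro allI impI)
    fix e :: real assume "e > 0"
    show "\<exists>x'\<in>\<real>. x' \<noteq> x \<and> dist x' x < e"
      using x \<open>e>0\<close> by (intro bexI[of _ "x + of_real (e/2)"]) (auto simp: dist_norm)
  qed
  hence nb: "at x within \<real> \<noteq> bot"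
    using trivial_limit_within by blast
  have ev: "eventually (\<lambda>y. (f y - f x) / (y - x) \<in> \<real>) (at x within \<real>)"
    unfolding eventually_at using d x fr by (intro exI[of _ d]) (auto intro!: Reals_diff Reals_divide)
  show ?thesis using Lim_in_closed_set[OF closed_complex_Reals ev nb lim] .
qed

lemma Hf_real:
  assumes "G_standing a" "ereal s < tG a"
  shows "Hf a (of_real s) \<in> \<real>"
proof -
  have "ereal (norm (exp s)) < RG a"
  proof -
    from assms(1) have "RG a = 1 \<or> RG a = \<infinity>" unfolding G_standing_def by auto
    then show ?thesis
    proof
      assume "RG a = 1"
      hence "tG a = 0" unfolding tG_def by (simp add: one_ereal_def zero_ereal_def)
      with assms(2) have "s < 0" by (simp add: zero_ereal_def)
      thus ?thesis using \<open>RG a = 1\<close> by (simp add: one_ereal_def)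
    qed simp
  qed
  hence sm: "summable (\<lambda>n. (a n)\<^sup>2 * exp s ^ n)"
    using summable_in_conv_radius[of "exp s" "\<lambda>n. (a n)\<^sup>2"] unfolding RG_def by simp
  have "Hf a (of_real s) = (\<Sum>n. complex_of_real ((a n)\<^sup>2 * exp s ^ n))"
    unfolding Hf_def Gf_def by (simp add: exp_of_real)
  also have "\<dots> = of_real (\<Sum>n. (a n)\<^sup>2 * exp s ^ n)"
    using suminf_of_real[OF sm, where 'a=complex] by simp
  finally show ?thesis by simp
qed

lemma key:
  fixes a :: "nat \<Rightarrow> real" and t R d e \<theta> :: real and L :: "complex \<Rightarrow> complex"
  assumes Gs: "G_standing a"
    and d: "d > 0" and dt: "\<And>s. \<bar>s - t\<bar> < d \<Longrightarrow> ereal s < tG a"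
    and R: "R > 0" and e: "e > 0"
    and Lhol: "L holomorphic_on cball 0 R" and L0: "L 0 = 0"
    and Lprop: "\<forall>\<tau>\<in>cball 0 R. exp (L \<tau>) = Hf a (of_real t + \<tau>) / Hf a (of_real t) \<and>
                cmod (L \<tau> - (\<tau> * Af a (of_real t) + \<tau>\<^sup>2 / 2 * Bf a (of_real t)))
                  \<le> e * (cmod \<tau>)\<^sup>2 * Re (Bf a (of_real t))"
    and th: "\<bar>\<theta>\<bar> \<le> R / 2"
  shows "(1 - 4*e) * Re (Bf a (of_real t)) * \<bar>\<theta>\<bar>
          \<le> cmod (Af a (Complex t \<theta>) - Af a (of_real t)) \<and>
       cmod (Af a (Complex t \<theta>) - Af a (of_real t))
          \<le> (1 + 4*e) * Re (Bf a (of_real t)) * \<bar>\<theta>\<bar> \<and>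
       (1 - 4*e) / 2 * \<theta>\<^sup>2 * Re (Bf a (of_real t))
          \<le> (LBINT \<phi>=0..\<theta>. Im (Af a (Complex t \<phi>))) \<and>
       (LBINT \<phi>=0..\<theta>. Im (Af a (Complex t \<phi>)))
          \<le> (1 + 4*e) / 2 * \<theta>\<^sup>2 * Re (Bf a (of_real t))"
proof -
  define c where "c = Hf a (of_real t)"
  define A0 where "A0 = Af a (of_real t)"
  define b where "b = Bf a (of_real t)"
  have Lp: "\<And>\<tau>. \<tau> \<in> cball 0 R \<Longrightarrow> exp (L \<tau>) = Hf a (of_real t + \<tau>) / c"
    using Lprop c_def by auto
  have Lb: "\<And>\<tau>. \<tau> \<in> cball 0 R \<Longrightarrow> cmod (L \<tau> - (\<tau> * A0 + \<tau>\<^sup>2 / 2 * b)) \<le> e * (cmod \<tau>)\<^sup>2 * Re b"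
    using Lprop A0_def b_def by auto
  have c0: "c \<noteq> 0"
  proof
    assume "c = 0"
    with Lp[of 0] R show False by simp
  qed
  have Heq: "\<And>w. w \<in> cball 0 R \<Longrightarrow> Hf a (of_real t + w) = c * exp (L w)"
    using Lp c0 by (simp add: field_simps)
  have Lholb: "L holomorphic_on ball 0 R"
    using holomorphic_on_subset[OF Lhol ball_subset_cball] .
  have LD: "\<And>\<tau>. \<tau> \<in> ball 0 R \<Longrightarrow> DERIV L \<tau> :> deriv L \<tau>"
    using Lholb holomorphic_on_imp_differentiable_at[OF Lholb open_ball]
      DERIV_deriv_iff_field_differentiable by blast
  have HD: "DERIV (Hf a) (of_real t + \<tau>) :> c * (exp (L \<tau>) * deriv L \<tau>)" if \<tau>: "\<tau> \<in> ball 0 R" for \<tau>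
  proof -
    have 1: "DERIV (\<lambda>z. L (z - of_real t)) (of_real t + \<tau>) :> deriv L \<tau> * 1"
      by (rule DERIV_chain2[of L]) (use LD[OF \<tau>] in \<open>auto intro!: derivative_eq_intros\<close>)
    have 2: "DERIV (\<lambda>z. c * exp (L (z - of_real t))) (of_real t + \<tau>) :> c * (exp (L \<tau>) * deriv L \<tau>)"
      using 1 by (auto intro!: derivative_eq_intros)
    show ?thesis
    proof (rule has_field_derivative_transform_within_open[OF 2, of "ball (of_real t) R"])
      show "of_real t + \<tau> \<in> ball (of_real t) R" using \<tau> by (simp add: dist_norm)
      fix z :: complex assume "z \<in> ball (of_real t) R"
      moreover have "norm (z - of_real t :: complex) = dist (of_real t) z" by (simp add: dist_norm norm_minus_commute)
      ultimately have "z - of_real t \<in> cball 0 R" by simp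
      from Heq[OF this] show "c * exp (L (z - of_real t)) = Hf a z" by simp
    qed simp
  qed
  have Aeq: "Af a (of_real t + \<tau>) = deriv L \<tau>" if \<tau>: "\<tau> \<in> ball 0 R" for \<tau>
  proof -
    have "deriv (Hf a) (of_real t + \<tau>) = c * (exp (L \<tau>) * deriv L \<tau>)"
      using DERIV_imp_deriv[OF HD[OF \<tau>]] .
    moreover have "Hf a (of_real t + \<tau>) = c * exp (L \<tau>)" using Heq \<tau> by auto
    ultimately show ?thesis unfolding Af_def using c0 by simp
  qed
  define r where "r = min d R"
  have r: "r > 0" using d R r_def by simp
  have Hr: "Hf a y \<in> \<real>" if "y \<in> \<real>" "dist y (of_real t) < r" for y
  proof -
    from that(1) obtain s where y: "y = of_real s" by (auto elim: Reals_cases)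
    have "\<bar>s - t\<bar> < d" using that(2) y r_def by (simp add: dist_norm flip: of_real_diff)
    thus ?thesis using Hf_real[OF Gs dt] y by simp
  qed
  have Ar: "Af a y \<in> \<real>" if y: "y \<in> \<real>" "dist y (of_real t) < r" for y
  proof -
    have yb: "y - of_real t \<in> ball 0 R" using y r_def by (simp add: dist_norm norm_minus_commute)
    have D: "DERIV (Hf a) y :> c * (exp (L (y - of_real t)) * deriv L (y - of_real t))"
      using HD[OF yb] by simp
    have "c * (exp (L (y - of_real t)) * deriv L (y - of_real t)) \<in> \<real>"
    proof (rule deriv_real_aux[OF D y(1)])
      show "r - dist y (of_real t) > 0" using y by simp
      fix z assume "z \<in> \<real>" "dist z y < r - dist y (of_real t)"
      moreover have "dist z (of_real t) \<le> dist z y + dist y (of_real t)" by (rule dist_triangle)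
      ultimately show "Hf a z \<in> \<real>" using Hr by simp
    qed
    hence "deriv (Hf a) y \<in> \<real>" using DERIV_imp_deriv[OF D] by simp
    thus ?thesis unfolding Af_def using Hr[OF y] by (auto intro: Reals_divide)
  qed
  have A0r: "A0 \<in> \<real>" unfolding A0_def using Ar r by simp
  have dLhol: "deriv L holomorphic_on ball 0 R" by (rule holomorphic_deriv[OF Lholb open_ball])
  have BD: "DERIV (Af a) (of_real t) :> deriv (deriv L) 0"
  proof -
    have "DERIV (deriv L) 0 :> deriv (deriv L) 0"
      using holomorphic_on_imp_differentiable_at[OF dLhol open_ball, of 0] R
      by (simp add: DERIV_deriv_iff_field_differentiable)
    hence 1: "DERIV (\<lambda>z. deriv L (z - of_real t)) (of_real t) :> deriv (deriv L) 0 * 1"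
      by (intro DERIV_chain2[of "deriv L"]) (auto intro!: derivative_eq_intros)
    show ?thesis
    proof (rule has_field_derivative_transform_within_open[OF 1[simplified], of "ball (of_real t) R"])
      fix z :: complex assume "z \<in> ball (of_real t) R"
      moreover have "norm (z - of_real t :: complex) = dist (of_real t) z" by (simp add: dist_norm norm_minus_commute)
      ultimately have "z - of_real t \<in> ball 0 R" by simp
      from Aeq[OF this] show "deriv L (z - of_real t) = Af a z" by simp
    qed (use R in auto)
  qed
  have "deriv (deriv L) 0 \<in> \<real>"
    by (rule deriv_real_aux[OF BD _ r]) (use Ar in auto)
  then have br: "b \<in> \<real>" unfolding b_def Bf_def using DERIV_imp_deriv[OF BD] by simp
  have bnn: "Re b \<ge> 0"
  proof -
    have Rc: "of_real R \<in> cball (0::complex) R" using R by simp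
    have "0 \<le> e * (cmod (of_real R :: complex))\<^sup>2 * Re b"
      using norm_ge_zero Lb[OF Rc] by (rule order_trans)
    moreover have "e * R^2 > 0" using e R by simp
    ultimately show ?thesis using e R by (auto simp add: zero_le_mult_iff)
  qed
  obtain \<beta> where bB: "b = of_real \<beta>" using br by (auto elim: Reals_cases)
  obtain \<alpha> where aA: "A0 = of_real \<alpha>" using A0r by (auto elim: Reals_cases)
  have Reb: "Re b = \<beta>" using bB by simp
  have est: "cmod (deriv L \<tau> - A0 - \<tau> * b) \<le> 4 * e * cmod \<tau> * Re b"
    if \<tau>0: "\<tau> \<noteq> 0" and \<tau>R: "cmod \<tau> \<le> R / 2" for \<tau>
  proof -
    define h where "h w = L w - (w * A0 + w\<^sup>2 / 2 * b)" for w
    have hhol: "h holomorphic_on cball 0 R" unfolding h_def by (intro holomorphic_intros Lhol) auto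
    have sub: "cball \<tau> (cmod \<tau>) \<subseteq> cball 0 R"
    proof
      fix w assume "w \<in> cball \<tau> (cmod \<tau>)"
      hence "cmod (w - \<tau>) \<le> cmod \<tau>" by (simp add: dist_norm norm_minus_commute)
      moreover have "cmod w \<le> cmod \<tau> + cmod (w - \<tau>)" by (metis norm_triangle_sub)
      ultimately show "w \<in> cball 0 R" using \<tau>R by simp
    qed
    have \<tau>b: "\<tau> \<in> ball 0 R" using \<tau>R R by simp
    have Dh: "DERIV h \<tau> :> deriv L \<tau> - (A0 + \<tau> * b)"
      unfolding h_def using LD[OF \<tau>b]
      by (auto intro!: derivative_eq_intros simp: field_simps power2_eq_square)
    have "norm ((deriv ^^ 1) h \<tau>) \<le> fact 1 * (e * (2 * cmod \<tau>)\<^sup>2 * Re b) / cmod \<tau> ^ 1"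
    proof (rule Cauchy_inequality)
      show "h holomorphic_on ball \<tau> (cmod \<tau>)"
        using holomorphic_on_subset[OF hhol] sub ball_subset_cball by blast
      show "continuous_on (cball \<tau> (cmod \<tau>)) h"
        using continuous_on_subset[OF holomorphic_on_imp_continuous_on[OF hhol] sub] .
      show "0 < cmod \<tau>" using \<tau>0 by simp
      fix x assume x: "cmod (\<tau> - x) = cmod \<tau>"
      have xc: "x \<in> cball 0 R" using sub x by (simp add: dist_norm subset_iff)
      have "cmod x \<le> cmod \<tau> + cmod (\<tau> - x)" by (metis norm_triangle_sub norm_minus_commute)
      hence "cmod x \<le> 2 * cmod \<tau>" using x by simp
      hence "(cmod x)\<^sup>2 \<le> (2 * cmod \<tau>)\<^sup>2" by (intro power_mono) auto
      hence "e * (cmod x)\<^sup>2 * Re b \<le> e * (2 * cmod \<tau>)\<^sup>2 * Re b"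
        using e bnn by (intro mult_right_mono mult_left_mono) auto
      moreover have "cmod (h x) \<le> e * (cmod x)\<^sup>2 * Re b" unfolding h_def using Lb[OF xc] .
      ultimately show "cmod (h x) \<le> e * (2 * cmod \<tau>)\<^sup>2 * Re b" by linarith
    qed
    moreover have "(deriv ^^ 1) h \<tau> = deriv L \<tau> - A0 - \<tau> * b"
      using DERIV_imp_deriv[OF Dh] by simp
    ultimately have X: "cmod (deriv L \<tau> - A0 - \<tau> * b) \<le> e * (2 * cmod \<tau>)\<^sup>2 * Re b / cmod \<tau>"
      by simp
    have "e * (2 * cmod \<tau>)\<^sup>2 * Re b / cmod \<tau> = 4 * e * cmod \<tau> * Re b"
      using \<tau>0 by (simp add: power2_eq_square field_simps)
    with X show ?thesis by simp
  qed
  have P1: "(1 - 4*e) * Re b * \<bar>\<theta>\<bar> \<le> cmod (Af a (Complex t \<theta>) - A0) \<and>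
      cmod (Af a (Complex t \<theta>) - A0) \<le> (1 + 4*e) * Re b * \<bar>\<theta>\<bar>"
  proof (cases "\<theta> = 0")
    case True
    then show ?thesis by (simp add: A0_def complex_of_real_def)
  next
    case False
    define \<tau> where "\<tau> = \<i> * of_real \<theta>"
    have nt: "cmod \<tau> = \<bar>\<theta>\<bar>" unfolding \<tau>_def by (simp add: norm_mult)
    have \<tau>0: "\<tau> \<noteq> 0" using False nt by auto
    have \<tau>R: "cmod \<tau> \<le> R / 2" using nt th by simp
    have \<tau>b: "\<tau> \<in> ball 0 R" using \<tau>R R by simp
    have Ct: "Complex t \<theta> = of_real t + \<tau>" by (simp add: \<tau>_def Complex_eq)
    have AX: "Af a (Complex t \<theta>) = deriv L \<tau>" using Aeq[OF \<tau>b] Ct by simp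
    have E: "cmod (deriv L \<tau> - A0 - \<tau> * b) \<le> 4 * e * \<bar>\<theta>\<bar> * Re b"
      using est[OF \<tau>0 \<tau>R] nt by simp
    have tb: "cmod (\<tau> * b) = \<bar>\<theta>\<bar> * Re b"
      using bB bnn nt by (simp add: norm_mult)
    have up: "cmod (deriv L \<tau> - A0) \<le> cmod (\<tau> * b) + cmod (deriv L \<tau> - A0 - \<tau> * b)"
      using norm_triangle_ineq[of "\<tau> * b" "deriv L \<tau> - A0 - \<tau> * b"] by simp
    have lo: "cmod (\<tau> * b) \<le> cmod (deriv L \<tau> - A0) + cmod (deriv L \<tau> - A0 - \<tau> * b)"
      using norm_triangle_ineq4[of "deriv L \<tau> - A0" "deriv L \<tau> - A0 - \<tau> * b"] by simp
    have eq1: "(1 - 4*e) * Re b * \<bar>\<theta>\<bar> = \<bar>\<theta>\<bar> * Re b - 4 * e * \<bar>\<theta>\<bar> * Re b"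
      by (simp add: algebra_simps)
    have eq2: "(1 + 4*e) * Re b * \<bar>\<theta>\<bar> = \<bar>\<theta>\<bar> * Re b + 4 * e * \<bar>\<theta>\<bar> * Re b"
      by (simp add: algebra_simps)
    show ?thesis unfolding AX eq1 eq2 using up lo E tb by linarith
  qed
  define F where "F \<phi> = - Re (L (\<i> * of_real \<phi>))" for \<phi>
  have cdL: "continuous_on (ball 0 R) (deriv L)"
    by (rule holomorphic_on_imp_continuous_on[OF dLhol])
  have inb: "\<i> * of_real \<phi> \<in> ball 0 R" if "min 0 \<theta> \<le> \<phi>" "\<phi> \<le> max 0 \<theta>" for \<phi>
  proof -
    have "\<bar>\<phi>\<bar> \<le> \<bar>\<theta>\<bar>" using that by linarith
    thus ?thesis using th R by (simp add: norm_mult)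
  qed
  have AXp: "Af a (Complex t \<phi>) = deriv L (\<i> * of_real \<phi>)" if "min 0 \<theta> \<le> \<phi>" "\<phi> \<le> max 0 \<theta>" for \<phi>
    using Aeq[OF inb[OF that]] by (simp add: Complex_eq)
  have FD: "(F has_vector_derivative Im (Af a (Complex t \<phi>))) (at \<phi> within {min 0 \<theta>..max 0 \<theta>})"
    if \<phi>: "min 0 \<theta> \<le> \<phi>" "\<phi> \<le> max 0 \<theta>" for \<phi>
  proof -
    have g: "DERIV (\<lambda>z. L (\<i> * z)) (of_real \<phi>) :> deriv L (\<i> * of_real \<phi>) * \<i>"
      by (rule DERIV_chain2[of L]) (use LD[OF inb[OF \<phi>]] in \<open>auto intro!: derivative_eq_intros\<close>)
    have "((\<lambda>x. L (\<i> * of_real x)) has_vector_derivative deriv L (\<i> * of_real \<phi>) * \<i>) (at \<phi>)"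
      using has_vector_derivative_real_field[OF g] .
    hence "((\<lambda>x. Re (L (\<i> * of_real x))) has_field_derivative Re (deriv L (\<i> * of_real \<phi>) * \<i>)) (at \<phi>)"
      by (rule has_vector_derivative_complex_iff[THEN iffD1, THEN conjunct1])
    hence "(F has_field_derivative Im (deriv L (\<i> * of_real \<phi>))) (at \<phi>)"
      unfolding F_def using DERIV_minus by fastforce
    hence "(F has_vector_derivative Im (Af a (Complex t \<phi>))) (at \<phi>)"
      using AXp[OF \<phi>] by (simp add: has_real_derivative_iff_has_vector_derivative)
    thus ?thesis by (rule has_vector_derivative_at_within)
  qed
  have cont: "continuous_on {min 0 \<theta>..max 0 \<theta>} (\<lambda>\<phi>. Im (Af a (Complex t \<phi>)))"
  proof -
    have c1: "continuous_on {min 0 \<theta>..max 0 \<theta>} (\<lambda>\<phi>. \<i> * complex_of_real \<phi>)"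
      by (intro continuous_intros)
    have "continuous_on {min 0 \<theta>..max 0 \<theta>} (\<lambda>\<phi>. deriv L (\<i> * complex_of_real \<phi>))"
      by (rule continuous_on_compose2[OF cdL c1]) (use inb in auto)
    hence "continuous_on {min 0 \<theta>..max 0 \<theta>} (\<lambda>\<phi>. Im (deriv L (\<i> * complex_of_real \<phi>)))"
      by (intro continuous_intros)
    thus ?thesis by (rule continuous_on_cong[THEN iffD1, rotated 2]) (auto simp: AXp)
  qed
  have I: "(LBINT \<phi>=0..\<theta>. Im (Af a (Complex t \<phi>))) = F \<theta> - F 0"
    using interval_integral_FTC_finite[OF cont FD] by (simp add: zero_ereal_def)
  define \<tau> where "\<tau> = \<i> * of_real \<theta>"
  have nt: "cmod \<tau> = \<bar>\<theta>\<bar>" unfolding \<tau>_def by (simp add: norm_mult)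
  have \<tau>c: "\<tau> \<in> cball 0 R" using nt th R by simp
  define hE where "hE = L \<tau> - (\<tau> * A0 + \<tau>\<^sup>2 / 2 * b)"
  have hEb: "cmod hE \<le> e * \<theta>\<^sup>2 * Re b" using Lb[OF \<tau>c] nt unfolding hE_def by simp
  have ReL: "Re (L \<tau>) = - \<theta>\<^sup>2 * \<beta> / 2 + Re hE"
  proof -
    have "L \<tau> = \<tau> * A0 + \<tau>\<^sup>2 / 2 * b + hE" unfolding hE_def by simp
    thus ?thesis unfolding \<tau>_def aA bB by (simp add: power2_eq_square)
  qed
  have I2: "(LBINT \<phi>=0..\<theta>. Im (Af a (Complex t \<phi>))) = \<theta>\<^sup>2 * \<beta> / 2 - Re hE"
    unfolding I F_def using ReL L0 \<tau>_def by simp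
  have rh: "\<bar>Re hE\<bar> \<le> e * \<theta>\<^sup>2 * Re b" using abs_Re_le_cmod[of hE] hEb by linarith
  have pos: "0 \<le> e * \<theta>\<^sup>2 * Re b" using e bnn by simp
  have eq1: "(1 - 4*e) / 2 * \<theta>\<^sup>2 * Re b = \<theta>\<^sup>2 * \<beta> / 2 - 2 * (e * \<theta>\<^sup>2 * Re b)"
    unfolding Reb by (simp add: field_simps)
  have eq2: "(1 + 4*e) / 2 * \<theta>\<^sup>2 * Re b = \<theta>\<^sup>2 * \<beta> / 2 + 2 * (e * \<theta>\<^sup>2 * Re b)"
    unfolding Reb by (simp add: field_simps)
  show ?thesis using P1 unfolding A0_def[symmetric] b_def[symmetric] I2 eq1 eq2
    using rh pos by linarith
qed

theorem lemma2p3: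
  fixes a :: "nat \<Rightarrow> real" and \<delta> :: "real \<Rightarrow> real" and T :: "real set" and \<epsilon> :: real
  assumes "G_standing a"
    and "local_delta_admissible a \<delta> T"
    and "\<epsilon> > 0"
  shows "\<exists>\<eta>>0. \<exists>t0. ereal t0 < tG a \<and>
    (\<forall>t\<in>T. t0 < t \<longrightarrow> (\<forall>\<theta>::real. \<bar>\<theta>\<bar> \<le> \<eta> / 2 * \<delta> t \<longrightarrow>
       (1 - \<epsilon>) * Re (Bf a (of_real t)) * \<bar>\<theta>\<bar>
          \<le> cmod (Af a (Complex t \<theta>) - Af a (of_real t)) \<and>
       cmod (Af a (Complex t \<theta>) - Af a (of_real t))
          \<le> (1 + \<epsilon>) * Re (Bf a (of_real t)) * \<bar>\<theta>\<bar> \<and>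
       (1 - \<epsilon>) / 2 * \<theta>\<^sup>2 * Re (Bf a (of_real t))
          \<le> (LBINT \<phi>=0..\<theta>. Im (Af a (Complex t \<phi>))) \<and>
       (LBINT \<phi>=0..\<theta>. Im (Af a (Complex t \<phi>)))
          \<le> (1 + \<epsilon>) / 2 * \<theta>\<^sup>2 * Re (Bf a (of_real t))))"
proof -
  note adm = assms(2)[unfolded local_delta_admissible_def]
  have Tsub: "T \<subseteq> {t. ereal t < tG a}" using adm by blast
  have dpos: "\<And>t. ereal t < tG a \<Longrightarrow> 0 < \<delta> t \<and> \<delta> t < pi \<and> ereal (t + \<delta> t) < tG a"
    using adm by blast
  have "\<exists>\<eta>>0. \<exists>t0. ereal t0 < tG a \<and>
        (\<forall>t\<in>T. t0 < t \<longrightarrow>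
          (\<exists>L. L holomorphic_on cball 0 (\<eta> * \<delta> t) \<and> L 0 = 0 \<and>
             (\<forall>\<tau>\<in>cball 0 (\<eta> * \<delta> t).
                exp (L \<tau>) = Hf a (of_real t + \<tau>) / Hf a (of_real t) \<and>
                cmod (L \<tau> - (\<tau> * Af a (of_real t) + \<tau>\<^sup>2 / 2 * Bf a (of_real t)))
                  \<le> (\<epsilon>/4) * (cmod \<tau>)\<^sup>2 * Re (Bf a (of_real t)))))"
    using adm[THEN conjunct2, THEN conjunct2, rule_format, of "\<epsilon>/4"] assms(3) by simp
  then obtain \<eta> t0 where \<eta>: "\<eta> > 0" and t0: "ereal t0 < tG a" and
    H: "\<forall>t\<in>T. t0 < t \<longrightarrow>
          (\<exists>L. L holomorphic_on cball 0 (\<eta> * \<delta> t) \<and> L 0 = 0 \<and>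
             (\<forall>\<tau>\<in>cball 0 (\<eta> * \<delta> t).
                exp (L \<tau>) = Hf a (of_real t + \<tau>) / Hf a (of_real t) \<and>
                cmod (L \<tau> - (\<tau> * Af a (of_real t) + \<tau>\<^sup>2 / 2 * Bf a (of_real t)))
                  \<le> (\<epsilon>/4) * (cmod \<tau>)\<^sup>2 * Re (Bf a (of_real t))))"
    by blast
  have "\<forall>t\<in>T. t0 < t \<longrightarrow> (\<forall>\<theta>::real. \<bar>\<theta>\<bar> \<le> \<eta> / 2 * \<delta> t \<longrightarrow>
       (1 - \<epsilon>) * Re (Bf a (of_real t)) * \<bar>\<theta>\<bar>
          \<le> cmod (Af a (Complex t \<theta>) - Af a (of_real t)) \<and>
       cmod (Af a (Complex t \<theta>) - Af a (of_real t))
          \<le> (1 + \<epsilon>) * Re (Bf a (of_real t)) * \<bar>\<theta>\<bar> \<and>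
       (1 - \<epsilon>) / 2 * \<theta>\<^sup>2 * Re (Bf a (of_real t))
          \<le> (LBINT \<phi>=0..\<theta>. Im (Af a (Complex t \<phi>))) \<and>
       (LBINT \<phi>=0..\<theta>. Im (Af a (Complex t \<phi>)))
          \<le> (1 + \<epsilon>) / 2 * \<theta>\<^sup>2 * Re (Bf a (of_real t)))"
  proof (intro ballI impI allI)
    fix t \<theta> assume tT: "t \<in> T" and tt0: "t0 < t" and thb: "\<bar>\<theta>\<bar> \<le> \<eta> / 2 * \<delta> t"
    obtain L where Lhol: "L holomorphic_on cball 0 (\<eta> * \<delta> t)" and L0: "L 0 = 0" and
      Lprop: "\<forall>\<tau>\<in>cball 0 (\<eta> * \<delta> t).
                exp (L \<tau>) = Hf a (of_real t + \<tau>) / Hf a (of_real t) \<and>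
                cmod (L \<tau> - (\<tau> * Af a (of_real t) + \<tau>\<^sup>2 / 2 * Bf a (of_real t)))
                  \<le> (\<epsilon>/4) * (cmod \<tau>)\<^sup>2 * Re (Bf a (of_real t))"
      using H tT tt0 by blast
    have tG: "ereal t < tG a" using Tsub tT by blast
    note dp = dpos[OF tG]
    have dt: "ereal s < tG a" if "\<bar>s - t\<bar> < \<delta> t" for s
    proof -
      have "ereal s < ereal (t + \<delta> t)" using that by simp
      thus ?thesis using dp by (meson order.strict_trans)
    qed
    have R: "\<eta> * \<delta> t > 0" using \<eta> dp by simp
    have e: "\<epsilon> / 4 > 0" using assms(3) by simp
    have th: "\<bar>\<theta>\<bar> \<le> \<eta> * \<delta> t / 2" using thb by simp
    from key[where d="\<delta> t", OF assms(1) _ dt R e Lhol L0 Lprop th] dp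
    show "(1 - \<epsilon>) * Re (Bf a (of_real t)) * \<bar>\<theta>\<bar>
          \<le> cmod (Af a (Complex t \<theta>) - Af a (of_real t)) \<and>
       cmod (Af a (Complex t \<theta>) - Af a (of_real t))
          \<le> (1 + \<epsilon>) * Re (Bf a (of_real t)) * \<bar>\<theta>\<bar> \<and>
       (1 - \<epsilon>) / 2 * \<theta>\<^sup>2 * Re (Bf a (of_real t))
          \<le> (LBINT \<phi>=0..\<theta>. Im (Af a (Complex t \<phi>))) \<and>
       (LBINT \<phi>=0..\<theta>. Im (Af a (Complex t \<phi>)))
          \<le> (1 + \<epsilon>) / 2 * \<theta>\<^sup>2 * Re (Bf a (of_real t))" by simp
  qed
  then show ?thesis using \<eta> t0 by blast
qed

end
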